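(* Let $G$ be a compact group with normalized Haar measure $\mu$, and let $H$ be a (closed) subgroup of $G$ with finite index $[G:H]$. Then $H$ is normal in $G$ if and only if, for every $\rho\in\hat G$, $\operatorname{rank}\widehat{\chi_H}(\rho)$ is either $d_\rho$ or $0$.
   Context: $\chi_H$ is the characteristic function of $H$. $\hat G$ is the set of (equivalence classes of) irreducible unitary representations of $G$, $d_\rho$ the dimension of $\rho$, and $\widehat{\chi_H}(\rho)=\int_G \chi_H(x)\rho(x)^\dagger\,d\mu(x)$. *)

theory Defs
  imports "HOL-Analysis.Analysis" "HOL-Probability.Probability"
    "Jordan_Normal_Form.Schur_Decomposition" "Jordan_Normal_Form.DL_Rank"
begin

text \<open>Groups are written additively via the class group_add, which does NOT
assume commutativity. A compact group is a compact Hausdorff topological group.\<close>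

definition compact_group :: "'g::{group_add, t2_space} itself \<Rightarrow> bool" where
  "compact_group _ \<longleftrightarrow> compact (UNIV :: 'g set)
     \<and> continuous_on UNIV (\<lambda>p::'g \<times> 'g. fst p + snd p)
     \<and> continuous_on UNIV (\<lambda>x::'g. - x)"

definition normalized_haar :: "'g::{group_add, topological_space} measure \<Rightarrow> bool" where
  "normalized_haar \<mu> \<longleftrightarrow> prob_space \<mu> \<and> sets \<mu> = sets borel
     \<and> (\<forall>g A. A \<in> sets borel \<longrightarrow> emeasure \<mu> ((\<lambda>x. g + x) ` A) = emeasure \<mu> A)"

definition is_subgroup :: "'g::group_add set \<Rightarrow> bool" where
  "is_subgroup H \<longleftrightarrow> 0 \<in> H \<and> (\<forall>x\<in>H. \<forall>y\<in>H. x + y \<in> H) \<and> (\<forall>x\<in>H. - x \<in> H)"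

definition left_cosets :: "'g::group_add set \<Rightarrow> 'g set set" where
  "left_cosets H = {(\<lambda>x. g + x) ` H | g. True}"

definition normal_subgroup :: "'g::group_add set \<Rightarrow> bool" where
  "normal_subgroup H \<longleftrightarrow> is_subgroup H \<and> (\<forall>g h. h \<in> H \<longrightarrow> g + h + - g \<in> H)"

definition unitary_rep :: "nat \<Rightarrow> ('g::{group_add, topological_space} \<Rightarrow> complex mat) \<Rightarrow> bool" where
  "unitary_rep n \<rho> \<longleftrightarrow>
     (\<forall>x. \<rho> x \<in> carrier_mat n n \<and> mat_adjoint (\<rho> x) * \<rho> x = 1\<^sub>m n)
     \<and> (\<forall>x y. \<rho> (x + y) = \<rho> x * \<rho> y)
     \<and> (\<forall>i<n. \<forall>j<n. continuous_on UNIV (\<lambda>x. \<rho> x $$ (i, j)))"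

definition invariant_subspace :: "nat \<Rightarrow> ('g \<Rightarrow> complex mat) \<Rightarrow> complex vec set \<Rightarrow> bool" where
  "invariant_subspace n \<rho> W \<longleftrightarrow> W \<subseteq> carrier_vec n \<and> 0\<^sub>v n \<in> W
     \<and> (\<forall>v\<in>W. \<forall>w\<in>W. v + w \<in> W) \<and> (\<forall>c. \<forall>v\<in>W. c \<cdot>\<^sub>v v \<in> W)
     \<and> (\<forall>x. \<forall>v\<in>W. \<rho> x *\<^sub>v v \<in> W)"

definition irreducible_unitary_rep :: "nat \<Rightarrow> ('g::{group_add, topological_space} \<Rightarrow> complex mat) \<Rightarrow> bool" where
  "irreducible_unitary_rep n \<rho> \<longleftrightarrow> n > 0 \<and> unitary_rep n \<rho>
     \<and> (\<forall>W. invariant_subspace n \<rho> W \<longrightarrow> W = {0\<^sub>v n} \<or> W = carrier_vec n)"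

definition fourier :: "'g measure \<Rightarrow> ('g \<Rightarrow> complex) \<Rightarrow> nat \<Rightarrow> ('g \<Rightarrow> complex mat) \<Rightarrow> complex mat" where
  "fourier \<mu> f n \<rho> = mat n n (\<lambda>(i, j). LINT x|\<mu>. f x * cnj (\<rho> x $$ (j, i)))"

definition mat_rank :: "complex mat \<Rightarrow> nat" where
  "mat_rank A = vec_space.rank (dim_row A) A"

end

theory Submission
  imports Defs
begin

lemma adj_dims[simp]: "dim_row (mat_adjoint A) = dim_col A" "dim_col (mat_adjoint A) = dim_row A"
  unfolding mat_adjoint_def by auto

lemma adj_index[simp]: "i < dim_col A \<Longrightarrow> j < dim_row A \<Longrightarrow> mat_adjoint A $$ (i,j) = cnj (A $$ (j,i))"
  unfolding mat_adjoint_def mat_of_rows_def by simp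

lemma adj_carrier[simp]: "A \<in> carrier_mat n m \<Longrightarrow> mat_adjoint A \<in> carrier_mat m n"
  unfolding carrier_mat_def by simp

lemma adj_adj[simp]: "mat_adjoint (mat_adjoint (A::complex mat)) = A"
  by (rule eq_matI) simp_all

lemma adj_one[simp]: "mat_adjoint (1\<^sub>m n :: complex mat) = 1\<^sub>m n"
  by (rule eq_matI) simp_all

lemma adj_zero[simp]: "mat_adjoint (0\<^sub>m n m :: complex mat) = 0\<^sub>m m n"
  by (rule eq_matI) simp_all

lemma adj_smult: "mat_adjoint (c \<cdot>\<^sub>m (A::complex mat)) = cnj c \<cdot>\<^sub>m mat_adjoint A"
  by (rule eq_matI) simp_all

lemma adj_mult: assumes "A \<in> carrier_mat n k" "B \<in> carrier_mat k m"
  shows "mat_adjoint (A * (B::complex mat)) = mat_adjoint B * mat_adjoint A"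
proof (rule eq_matI)
  fix i j assume ij: "i < dim_row (mat_adjoint B * mat_adjoint A)" "j < dim_col (mat_adjoint B * mat_adjoint A)"
  hence i: "i < m" and j: "j < n" using assms by simp_all
  have "mat_adjoint (A * B) $$ (i, j) = cnj (\<Sum>l\<in>{0..<k}. A $$ (j,l) * B $$ (l,i))"
    using assms i j by (simp add: scalar_prod_def)
  also have "\<dots> = (\<Sum>l\<in>{0..<k}. cnj (B $$ (l,i)) * cnj (A $$ (j,l)))"
    by (simp add: mult.commute)
  also have "\<dots> = (mat_adjoint B * mat_adjoint A) $$ (i,j)"
    using assms i j by (simp add: scalar_prod_def)
  finally show "mat_adjoint (A * B) $$ (i, j) = (mat_adjoint B * mat_adjoint A) $$ (i,j)" .
qed (use assms in simp_all)
lemma unitary_rep_carrier: "unitary_rep n \<sigma> \<Longrightarrow> \<sigma> x \<in> carrier_mat n n"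
  unfolding unitary_rep_def by auto

lemma unitary_rep_unit: "unitary_rep n \<sigma> \<Longrightarrow> mat_adjoint (\<sigma> x) * \<sigma> x = 1\<^sub>m n"
  unfolding unitary_rep_def by auto

lemma unitary_rep_hom: "unitary_rep n \<sigma> \<Longrightarrow> \<sigma> (x + y) = \<sigma> x * \<sigma> y"
  unfolding unitary_rep_def by auto

lemma unitary_rep_zero: assumes "unitary_rep n (\<sigma> :: 'g::{group_add,topological_space} \<Rightarrow> complex mat)"
  shows "\<sigma> 0 = 1\<^sub>m n"
proof -
  note c = unitary_rep_carrier[OF assms]
  have e: "\<sigma> 0 = \<sigma> 0 * \<sigma> 0" using unitary_rep_hom[OF assms, of 0 0] by (metis add.right_neutral)
  have "\<sigma> 0 = 1\<^sub>m n * \<sigma> 0" using c[of 0] by simp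
  also have "\<dots> = (mat_adjoint (\<sigma> 0) * \<sigma> 0) * \<sigma> 0" using unitary_rep_unit[OF assms] by simp
  also have "\<dots> = mat_adjoint (\<sigma> 0) * (\<sigma> 0 * \<sigma> 0)"
    using c by (meson adj_carrier assoc_mult_mat)
  also have "\<dots> = 1\<^sub>m n" using e unitary_rep_unit[OF assms] by simp
  finally show ?thesis .
qed

lemma unitary_rep_inv: assumes "unitary_rep n (\<sigma> :: 'g::{group_add,topological_space} \<Rightarrow> complex mat)"
  shows "\<sigma> g * \<sigma> (-g) = 1\<^sub>m n" "\<sigma> (-g) * \<sigma> g = 1\<^sub>m n" "mat_adjoint (\<sigma> g) = \<sigma> (-g)"
proof -
  note c = unitary_rep_carrier[OF assms]
  show 1: "\<sigma> g * \<sigma> (-g) = 1\<^sub>m n" using unitary_rep_hom[OF assms, of g "-g"] unitary_rep_zero[OF assms] by simp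
  show "\<sigma> (-g) * \<sigma> g = 1\<^sub>m n" using unitary_rep_hom[OF assms, of "-g" g] unitary_rep_zero[OF assms] by simp
  have "mat_adjoint (\<sigma> g) = mat_adjoint (\<sigma> g) * (\<sigma> g * \<sigma> (-g))" using 1 adj_carrier[OF c[of g]] by (metis right_mult_one_mat)
  also have "\<dots> = (mat_adjoint (\<sigma> g) * \<sigma> g) * \<sigma> (-g)"
    by (rule assoc_mult_mat[symmetric, OF adj_carrier[OF c[of g]] c c])
  also have "\<dots> = \<sigma> (-g)" using unitary_rep_unit[OF assms] left_mult_one_mat[OF c] by simp
  finally show "mat_adjoint (\<sigma> g) = \<sigma> (-g)" .
qed



locale cgH =
  fixes \<mu> :: "'g::{group_add, t2_space} measure" and H :: "'g set"
  assumes cg: "compact_group TYPE('g)"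
    and haar: "normalized_haar \<mu>"
    and sub: "is_subgroup H" and clo: "closed H"
    and fin: "finite (left_cosets H)"
begin

lemma prob: "prob_space \<mu>" using haar unfolding normalized_haar_def by auto
lemma sets_eq: "sets \<mu> = sets borel" using haar unfolding normalized_haar_def by auto
lemma space_eq[simp]: "space \<mu> = UNIV" using sets_eq_imp_space_eq[OF sets_eq] by simp
lemma inv_meas: "A \<in> sets borel \<Longrightarrow> emeasure \<mu> ((\<lambda>x. g + x) ` A) = emeasure \<mu> A"
  using haar unfolding normalized_haar_def by auto
lemma fmeas: "finite_measure \<mu>" using prob by (simp add: prob_space_def)

lemma H0: "0 \<in> H" and Hadd: "x \<in> H \<Longrightarrow> y \<in> H \<Longrightarrow> x + y \<in> H" and Hneg: "x \<in> H \<Longrightarrow> - x \<in> H"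
  using sub unfolding is_subgroup_def by auto

lemma Hneg_iff: "- x \<in> H \<longleftrightarrow> x \<in> H"
  using Hneg[of x] Hneg[of "-x"] by auto

lemma Hadd_left_iff: "h \<in> H \<Longrightarrow> h + x \<in> H \<longleftrightarrow> x \<in> H"
proof
  assume "h \<in> H" "h + x \<in> H"
  then have "- h + (h + x) \<in> H" using Hadd Hneg by blast
  then show "x \<in> H" by (simp add: add.assoc[symmetric])
qed (use Hadd in auto)

lemma cont_add: "continuous_on UNIV (\<lambda>p::'g \<times> 'g. fst p + snd p)"
  using cg unfolding compact_group_def by auto
lemma cont_neg: "continuous_on UNIV (\<lambda>x::'g. - x)"
  using cg unfolding compact_group_def by auto
lemma compact_univ: "compact (UNIV :: 'g set)"
  using cg unfolding compact_group_def by auto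

lemma cont_add2:
  fixes f g :: "'a::topological_space \<Rightarrow> 'g"
  assumes "continuous_on UNIV f" "continuous_on UNIV g"
  shows "continuous_on UNIV (\<lambda>x. f x + g x)"
proof -
  have "continuous_on UNIV (\<lambda>x. (f x, g x))" using assms by (intro continuous_on_Pair)
  from continuous_on_compose2[OF cont_add this] show ?thesis by simp
qed

lemma cont_neg2:
  fixes f :: "'a::topological_space \<Rightarrow> 'g"
  assumes "continuous_on UNIV f"
  shows "continuous_on UNIV (\<lambda>x. - f x)"
  using continuous_on_compose2[OF cont_neg assms] by simp

lemma cont_transl: "continuous_on UNIV (\<lambda>x::'g. g + x)"
  by (intro cont_add2 continuous_on_const continuous_on_id)

lemma transl_image: "(\<lambda>x::'g. g + x) ` A = (\<lambda>x. - g + x) -` A"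
proof (auto simp: image_def)
  fix y assume "- g + y \<in> A"
  then show "\<exists>x\<in>A. y = g + x" by (intro bexI[of _ "- g + y"]) (auto simp: add.assoc[symmetric])
qed

lemma closed_transl: "closed A \<Longrightarrow> closed ((\<lambda>x::'g. g + x) ` A)"
  unfolding transl_image
  using cont_transl[of "-g"] by (simp add: closed_vimage continuous_on_eq_continuous_at)

lemma H_sets: "H \<in> sets \<mu>" using clo sets_eq by (simp add: borel_closed)

lemma meas_cont: "continuous_on UNIV f \<Longrightarrow> f \<in> borel_measurable \<mu>"
  using borel_measurable_continuous_onI measurable_cong_sets[OF sets_eq refl] by blast

lemma meas_transl: "(\<lambda>x::'g. g + x) \<in> measurable \<mu> \<mu>"
  using borel_measurable_continuous_onI[OF cont_transl] measurable_cong_sets[OF sets_eq sets_eq] by blast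

lemma distr_transl: "distr \<mu> \<mu> (\<lambda>x. g + x) = \<mu>"
proof (rule measure_eqI)
  fix A assume A: "A \<in> sets (distr \<mu> \<mu> (\<lambda>x. g + x))"
  then have A': "A \<in> sets borel" using sets_eq by simp
  have "emeasure (distr \<mu> \<mu> (\<lambda>x. g + x)) A = emeasure \<mu> ((\<lambda>x. g + x) -` A)"
    using A meas_transl by (simp add: emeasure_distr)
  also have "(\<lambda>x. g + x) -` A = (\<lambda>x. - g + x) ` A" using transl_image[of "-g" A] by simp
  also have "emeasure \<mu> \<dots> = emeasure \<mu> A" using inv_meas[OF A'] .
  finally show "emeasure (distr \<mu> \<mu> (\<lambda>x. g + x)) A = emeasure \<mu> A" .
qed simp

lemma integral_transl:
  fixes f :: "'g \<Rightarrow> 'b::{banach, second_countable_topology}"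
  assumes "f \<in> borel_measurable \<mu>"
  shows "(LINT x|\<mu>. f (g + x)) = (LINT x|\<mu>. f x)"
  using integral_distr[OF meas_transl assms, of g] distr_transl by simp

lemma integrable_indH:
  fixes f :: "'g \<Rightarrow> complex"
  assumes "continuous_on UNIV f"
  shows "integrable \<mu> (\<lambda>x. indicator H x * f x)"
proof -
  have "compact (f ` UNIV)" using compact_continuous_image[OF assms compact_univ] .
  then have "bounded (f ` UNIV)" by (rule compact_imp_bounded)
  then obtain B where B': "\<forall>y\<in>f ` UNIV. norm y \<le> B" unfolding bounded_iff by blast
  have B: "norm (f x) \<le> B" for x using B' by simp
  have B0: "0 \<le> B" using B[of undefined] norm_ge_zero[of "f undefined"] by linarith
  have bnd: "norm (indicator H x * f x) \<le> B" for x
    using B[of x] B0 by (cases "x \<in> H") simp_all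
  have meas:  "(\<lambda>x. indicator H x * f x) \<in> borel_measurable \<mu>"
  proof -
    have "indicator H \<in> borel_measurable \<mu>" using H_sets by simp
    then show ?thesis using meas_cont[OF assms] by (rule borel_measurable_times)
  qed
  have "AE x in \<mu>. norm (indicator H x * f x) \<le> B" by (rule AE_I2) (rule bnd)
  then show ?thesis by (rule finite_measure.integrable_const_bound[OF fmeas _ meas])
qed

definition "mH = measure \<mu> H"

lemma coset_sets: "(\<lambda>x. g + x) ` H \<in> sets \<mu>"
  using closed_transl[OF clo] sets_eq by (simp add: borel_closed)

lemma coset_measure: "measure \<mu> ((\<lambda>x. g + x) ` H) = mH"
  unfolding mH_def measure_def using inv_meas[of H g] clo by (simp add: borel_closed)

lemma mH_pos: "mH > 0"
proof -
  have U0: "UNIV \<subseteq> \<Union> (left_cosets H)"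
  proof
    fix x :: 'g assume "x \<in> UNIV"
    have "x \<in> (\<lambda>y. x + y) ` H" by (rule rev_image_eqI[OF H0]) simp
    moreover have "(\<lambda>y. x + y) ` H \<in> left_cosets H" unfolding left_cosets_def by blast
    ultimately show "x \<in> \<Union> (left_cosets H)" by blast
  qed
  have U: "UNIV = \<Union> (left_cosets H)" using U0 by blast
  have m1: "measure \<mu> UNIV = 1" using prob_space.prob_space[OF prob] by simp
  have "\<Union> (id ` left_cosets H) = UNIV" using U by simp
  then have "1 = measure \<mu> (\<Union> (id ` left_cosets H))" using m1 by simp
  also have "\<dots> \<le> (\<Sum>C\<in>left_cosets H. measure \<mu> (id C))"
    using fin coset_sets by (intro finite_measure.finite_measure_subadditive_finite[OF fmeas]) (auto simp: left_cosets_def)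
  also have "\<dots> = (\<Sum>C\<in>left_cosets H. mH)"
    by (intro sum.cong refl) (force simp: left_cosets_def coset_measure)
  also have "\<dots> = card (left_cosets H) * mH" by simp
  finally have "1 \<le> card (left_cosets H) * mH" .
  moreover have "mH \<ge> 0" unfolding mH_def by simp
  ultimately show ?thesis by (cases "mH = 0") auto
qed

lemma integral_indH: "(LINT x|\<mu>. (indicator H x :: complex)) = complex_of_real mH"
proof -
  have "(LINT x|\<mu>. (indicator H x :: complex)) = (LINT x|\<mu>. complex_of_real (indicator H x))"
    by (simp only: of_real_indicator)
  also have "\<dots> = complex_of_real (LINT x|\<mu>. indicator H x)" by (rule integral_complex_of_real)
  also have "(LINT x|\<mu>. indicator H x) = mH" unfolding mH_def
    using H_sets fmeas by (simp add: finite_measure.emeasure_finite)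
  finally show ?thesis .
qed

lemma integral_indH_const: fixes c :: complex shows "(LINT x|\<mu>. indicator H x * c) = mH * c"
proof -
  have "(LINT x|\<mu>. indicator H x * c) = (LINT x|\<mu>. (indicator H x :: complex)) * c"
    by (rule integral_mult_left_zero)
  then show ?thesis using integral_indH by simp
qed

end


lemma mult_unit_vec_col: assumes "(A :: complex mat) \<in> carrier_mat n m" "j < m"
  shows "A *\<^sub>v unit_vec m j = col A j"
  by (rule eq_vecI) (use assms in simp_all)

lemma mat_eq_on_vecs: assumes "(A :: complex mat) \<in> carrier_mat n m" "B \<in> carrier_mat n m"
  and "\<And>x. x \<in> carrier_vec m \<Longrightarrow> A *\<^sub>v x = B *\<^sub>v x"
shows "A = B"
proof (rule mat_col_eqI)
  fix j assume "j < dim_col B"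
  then have j: "j < m" using assms by simp
  show "col A j = col B j"
    using assms(3)[of "unit_vec m j"] mult_unit_vec_col[OF assms(1) j] mult_unit_vec_col[OF assms(2) j] by simp
qed (use assms in simp_all)

lemma mat_vec_zero[simp]: "(A::complex mat) \<in> carrier_mat n m \<Longrightarrow> A *\<^sub>v 0\<^sub>v m = 0\<^sub>v n"
  by (rule eq_vecI) simp_all

lemma smult_vec_zero'[simp]: "(c::complex) \<cdot>\<^sub>v 0\<^sub>v n = 0\<^sub>v n"
  by (rule eq_vecI) simp_all

lemma vec_minus_eq0: assumes "(a::complex vec) \<in> carrier_vec n" "b \<in> carrier_vec n" "a - b = 0\<^sub>v n"
  shows "a = b"
proof (rule eq_vecI)
  fix i assume "i < dim_vec b"
  then have i: "i < n" using assms by simp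
  have "(a - b) $ i = 0" using assms i by simp
  moreover have "(a - b) $ i = a $ i - b $ i" using assms(1,2) i by simp
  ultimately show "a $ i = b $ i" by simp
qed (use assms in simp)

lemma mat_rank_zero: "mat_rank (0\<^sub>m n n :: complex mat) = 0"
  unfolding mat_rank_def using vec_space.rank_0I[of n n] by simp

lemma mat_rank_scalar_one: assumes "(c::complex) \<noteq> 0" shows "mat_rank (c \<cdot>\<^sub>m 1\<^sub>m n) = n"
proof -
  have "det (c \<cdot>\<^sub>m 1\<^sub>m n) \<noteq> 0" using assms by simp
  then show ?thesis unfolding mat_rank_def
    using vec_space.det_rank_iff[of "c \<cdot>\<^sub>m 1\<^sub>m n" n] by simp
qed

lemma mat_rank_full_inj: assumes "A \<in> carrier_mat n n" "mat_rank (A::complex mat) = n"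
  "x \<in> carrier_vec n" "A *\<^sub>v x = 0\<^sub>v n" shows "x = 0\<^sub>v n"
proof -
  have "det A \<noteq> 0" using vec_space.det_rank_iff[OF assms(1)] assms(1,2) unfolding mat_rank_def by simp
  then show ?thesis using det_0_iff_vec_prod_zero_field[OF assms(1)] assms(3,4) by blast
qed

lemma mat_rank_nonzero: assumes "A \<in> carrier_mat n n" "x \<in> carrier_vec n" "(A::complex mat) *\<^sub>v x \<noteq> 0\<^sub>v n"
  shows "mat_rank A \<noteq> 0"
proof -
  have "\<exists>j<n. col A j \<noteq> 0\<^sub>v n"
  proof (rule ccontr)
    assume "\<not> ?thesis"
    then have "A = 0\<^sub>m n n" using assms(1)
      by (intro mat_col_eqI) auto
    moreover have "0\<^sub>m n n *\<^sub>v x = 0\<^sub>v n" by (rule eq_vecI) (use assms(2) in simp_all)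
    ultimately show False using assms by simp
  qed
  then obtain j where j: "j < n" "col A j \<noteq> 0\<^sub>v n" by blast
  interpret vs: vec_space "TYPE(complex)" n .
  have cj: "col A j \<in> carrier_vec n" using assms(1) j by simp
  have "col A j \<notin> vs.span {}" using j(2) vs.span_empty by simp
  moreover have "vs.lin_indpt {}" using vs.lin_dep_def by auto
  ultimately have li: "vs.lin_indpt {col A j}"
    using vs.lin_dep_iff_in_span[of "{}" "col A j"] cj by simp
  have "{col A j} \<subseteq> set (cols A)" using j assms(1) by (simp add: cols_def)
  then have "card {col A j} \<le> vs.rank A" using vs.rank_ge_card_indpt[OF assms(1) _ li] by blast
  then show ?thesis unfolding mat_rank_def using assms(1) by simp
qed


lemma unitary_rep_cont: "unitary_rep n \<sigma> \<Longrightarrow> i < n \<Longrightarrow> j < n \<Longrightarrow> continuous_on UNIV (\<lambda>x. \<sigma> x $$ (i, j))"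
  unfolding unitary_rep_def by auto

context cgH begin

abbreviation "FT r \<sigma> \<equiv> fourier \<mu> (indicator H) r \<sigma>"

lemma FT_carrier: "FT r \<sigma> \<in> carrier_mat r r" unfolding fourier_def by simp
lemma FT_dims[simp]: "dim_row (FT r \<sigma>) = r" "dim_col (FT r \<sigma>) = r" unfolding fourier_def by simp_all

lemma FT_index: "i < r \<Longrightarrow> j < r \<Longrightarrow> FT r \<sigma> $$ (i,j) = (LINT z|\<mu>. indicator H z * cnj (\<sigma> z $$ (j,i)))"
  unfolding fourier_def by simp

lemma FT_fixed:
  assumes u: "unitary_rep r \<sigma>" and x: "x \<in> carrier_vec r" and fx: "\<forall>h\<in>H. \<sigma> h *\<^sub>v x = x"
  shows "FT r \<sigma> *\<^sub>v x = complex_of_real mH \<cdot>\<^sub>v x"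
proof (rule eq_vecI)
  fix i assume "i < dim_vec (complex_of_real mH \<cdot>\<^sub>v x)"
  then have i: "i < r" using x by simp
  have cont: "continuous_on UNIV (\<lambda>z. cnj (\<sigma> z $$ (j,i)) * x $ j)" if "j < r" for j
    using unitary_rep_cont[OF u that i] by (intro continuous_on_mult continuous_on_cnj continuous_on_const)
  have pw: "indicator H z * (\<Sum>j\<in>{0..<r}. cnj (\<sigma> z $$ (j,i)) * x $ j) = indicator H z * x $ i" for z
  proof (cases "z \<in> H")
    case True
    have "(\<Sum>j\<in>{0..<r}. cnj (\<sigma> z $$ (j,i)) * x $ j) = (mat_adjoint (\<sigma> z) *\<^sub>v x) $ i"
      using i x unitary_rep_carrier[OF u, of z] by (simp add: scalar_prod_def)
    also have "\<dots> = (\<sigma> (-z) *\<^sub>v x) $ i" using unitary_rep_inv[OF u] by simp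
    also have "\<dots> = x $ i" using fx Hneg[OF True] by simp
    finally show ?thesis by simp
  qed simp
  have "(FT r \<sigma> *\<^sub>v x) $ i = (\<Sum>j\<in>{0..<r}. FT r \<sigma> $$ (i,j) * x $ j)"
    using i x FT_carrier[of r \<sigma>] by (simp add: scalar_prod_def)
  also have "\<dots> = (\<Sum>j\<in>{0..<r}. (LINT z|\<mu>. indicator H z * (cnj (\<sigma> z $$ (j,i)) * x $ j)))"
    by (intro sum.cong refl) (simp add: FT_index i integral_mult_left_zero[symmetric] mult.assoc)
  also have "\<dots> = (LINT z|\<mu>. (\<Sum>j\<in>{0..<r}. indicator H z * (cnj (\<sigma> z $$ (j,i)) * x $ j)))"
    by (rule Bochner_Integration.integral_sum[symmetric]) (use integrable_indH[OF cont] in simp)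
  also have "\<dots> = (LINT z|\<mu>. indicator H z * x $ i)"
    using pw by (simp add: sum_distrib_left)
  also have "\<dots> = mH * x $ i" by (rule integral_indH_const)
  finally show "(FT r \<sigma> *\<^sub>v x) $ i = (complex_of_real mH \<cdot>\<^sub>v x) $ i" using i x by simp
qed (use x in simp)

lemma FT_right_inv:
  assumes u: "unitary_rep r \<sigma>" and h: "h \<in> H"
  shows "FT r \<sigma> * \<sigma> h = FT r \<sigma>"
proof (rule eq_matI)
  fix i j assume "i < dim_row (FT r \<sigma>)" "j < dim_col (FT r \<sigma>)"
  then have i: "i < r" and j: "j < r" using FT_carrier[of r \<sigma>] by auto
  note c = unitary_rep_carrier[OF u]
  have cont: "continuous_on UNIV (\<lambda>z. cnj (\<sigma> z $$ (l,i)) * \<sigma> h $$ (l,j))" if "l < r" for l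
    using unitary_rep_cont[OF u that i] by (intro continuous_on_mult continuous_on_cnj continuous_on_const)
  define \<phi> where "\<phi> y = indicator H y * \<sigma> (-y) $$ (i,j)" for y
  have cphi: "continuous_on UNIV (\<lambda>y. \<sigma> (-y) $$ (i,j))"
    using continuous_on_compose2[OF unitary_rep_cont[OF u i j] cont_neg] by simp
  have mphi: "\<phi> \<in> borel_measurable \<mu>" unfolding \<phi>_def
    using borel_measurable_times[OF borel_measurable_indicator[OF H_sets] meas_cont[OF cphi]] by simp
  have pw: "indicator H z * (\<Sum>l\<in>{0..<r}. cnj (\<sigma> z $$ (l,i)) * \<sigma> h $$ (l,j)) = \<phi> (-h + z)" for z
  proof -
    have "(\<Sum>l\<in>{0..<r}. cnj (\<sigma> z $$ (l,i)) * \<sigma> h $$ (l,j)) = (mat_adjoint (\<sigma> z) * \<sigma> h) $$ (i,j)"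
      using i j c[of z] c[of h] by (simp add: scalar_prod_def)
    also have "\<dots> = (\<sigma> (-z) * \<sigma> h) $$ (i,j)" using unitary_rep_inv[OF u] by simp
    also have "\<dots> = \<sigma> (-z + h) $$ (i,j)" using unitary_rep_hom[OF u] by simp
    also have "-z + h = - (-h + z)" by (simp add: minus_add)
    finally have e: "(\<Sum>l\<in>{0..<r}. cnj (\<sigma> z $$ (l,i)) * \<sigma> h $$ (l,j)) = \<sigma> (- (-h + z)) $$ (i,j)" .
    have "indicator H z = (indicator H (-h + z) :: complex)"
      using Hadd_left_iff[OF Hneg[OF h], of z] by (simp add: indicator_def)
    then show ?thesis unfolding e \<phi>_def by simp
  qed
  have "(FT r \<sigma> * \<sigma> h) $$ (i,j) = (\<Sum>l\<in>{0..<r}. FT r \<sigma> $$ (i,l) * \<sigma> h $$ (l,j))"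
    using i j FT_carrier[of r \<sigma>] c[of h] by (simp add: scalar_prod_def)
  also have "\<dots> = (\<Sum>l\<in>{0..<r}. (LINT z|\<mu>. indicator H z * (cnj (\<sigma> z $$ (l,i)) * \<sigma> h $$ (l,j))))"
    by (intro sum.cong refl) (simp add: FT_index i integral_mult_left_zero[symmetric] mult.assoc)
  also have "\<dots> = (LINT z|\<mu>. (\<Sum>l\<in>{0..<r}. indicator H z * (cnj (\<sigma> z $$ (l,i)) * \<sigma> h $$ (l,j))))"
    by (rule Bochner_Integration.integral_sum[symmetric]) (use integrable_indH[OF cont] in simp)
  also have "\<dots> = (LINT z|\<mu>. \<phi> (-h + z))"
    using pw by (simp add: sum_distrib_left)
  also have "\<dots> = (LINT z|\<mu>. \<phi> z)" by (rule integral_transl[OF mphi])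
  also have "\<dots> = (LINT z|\<mu>. indicator H z * cnj (\<sigma> z $$ (j,i)))"
  proof -
    have "\<sigma> (-z) $$ (i,j) = cnj (\<sigma> z $$ (j,i))" for z
      using unitary_rep_inv(3)[OF u, of z, symmetric] i j c[of z] by simp
    then show ?thesis unfolding \<phi>_def by simp
  qed
  also have "\<dots> = FT r \<sigma> $$ (i,j)" using FT_index[OF i j] by simp
  finally show "(FT r \<sigma> * \<sigma> h) $$ (i,j) = FT r \<sigma> $$ (i,j)" .
qed (use unitary_rep_carrier[OF u, of h] in simp_all)


lemma FT_zero:
  assumes u: "unitary_rep r \<sigma>" and nf: "\<forall>x\<in>carrier_vec r. (\<forall>h\<in>H. \<sigma> h *\<^sub>v x = x) \<longrightarrow> x = 0\<^sub>v r"
  shows "FT r \<sigma> = 0\<^sub>m r r"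
proof -
  note c = unitary_rep_carrier[OF u]
  define A where "A = mat_adjoint (FT r \<sigma>)"
  have A: "A \<in> carrier_mat r r" unfolding A_def using FT_carrier by simp
  have fixA: "\<sigma> h * A = A" if h: "h \<in> H" for h
  proof -
    have "FT r \<sigma> * \<sigma> (-h) = FT r \<sigma>" using FT_right_inv[OF u Hneg[OF h]] .
    then have "mat_adjoint (FT r \<sigma> * \<sigma> (-h)) = A" unfolding A_def by simp
    then have "mat_adjoint (\<sigma> (-h)) * A = A" unfolding A_def using adj_mult[OF FT_carrier c] by simp
    then show ?thesis using unitary_rep_inv(3)[OF u, of "-h"] by simp
  qed
  have "A = 0\<^sub>m r r"
  proof (rule mat_col_eqI)
    fix j assume "j < dim_col (0\<^sub>m r r :: complex mat)"
    then have j: "j < r" by simp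
    have "col A j \<in> carrier_vec r" using A j by simp
    moreover have "\<sigma> h *\<^sub>v col A j = col A j" if "h \<in> H" for h
      using col_mult2[OF c A j, of h] fixA[OF that] by simp
    ultimately have "col A j = 0\<^sub>v r" using nf by blast
    then show "col A j = col (0\<^sub>m r r) j" using j by simp
  qed (use A in simp_all)
  then have "mat_adjoint A = 0\<^sub>m r r" by simp
  then show ?thesis unfolding A_def by simp
qed

lemma FT_one:
  assumes u: "unitary_rep r \<sigma>" and af: "\<forall>x\<in>carrier_vec r. \<forall>h\<in>H. \<sigma> h *\<^sub>v x = x"
  shows "FT r \<sigma> = complex_of_real mH \<cdot>\<^sub>m 1\<^sub>m r"
  by (rule mat_eq_on_vecs[OF FT_carrier]) (use FT_fixed[OF u] af in auto)

lemma forward_rank: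
  assumes nrm: "\<forall>g h. h \<in> H \<longrightarrow> g + h + - g \<in> H" and irr: "irreducible_unitary_rep n \<sigma>"
  shows "mat_rank (FT n \<sigma>) = n \<or> mat_rank (FT n \<sigma>) = 0"
proof -
  have u: "unitary_rep n \<sigma>" using irr unfolding irreducible_unitary_rep_def by simp
  note c = unitary_rep_carrier[OF u]
  define T where "T = {x \<in> carrier_vec n. \<forall>h\<in>H. \<sigma> h *\<^sub>v x = x}"
  have "invariant_subspace n \<sigma> T"
    unfolding invariant_subspace_def
  proof (intro conjI ballI allI)
    show "T \<subseteq> carrier_vec n" unfolding T_def by auto
    show "0\<^sub>v n \<in> T" unfolding T_def using mat_vec_zero[OF c] by simp
  next
    fix v w assume "v \<in> T" "w \<in> T"
    then show "v + w \<in> T" unfolding T_def using mult_add_distrib_mat_vec[OF c] by simp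
  next
    fix a v assume "v \<in> T"
    then show "a \<cdot>\<^sub>v v \<in> T" unfolding T_def using mult_mat_vec[OF c] by simp
  next
    fix g v assume v: "v \<in> T"
    have vc: "v \<in> carrier_vec n" using v unfolding T_def by simp
    have "\<sigma> h *\<^sub>v (\<sigma> g *\<^sub>v v) = \<sigma> g *\<^sub>v v" if h: "h \<in> H" for h
    proof -
      have k: "-g + h + g \<in> H" using nrm h by (metis minus_minus)
      have "h + g = g + (-g + h + g)" by (simp add: add.assoc)
      then have "\<sigma> h * \<sigma> g = \<sigma> g * \<sigma> (-g + h + g)" using unitary_rep_hom[OF u] by metis
      then have "\<sigma> h *\<^sub>v (\<sigma> g *\<^sub>v v) = \<sigma> g *\<^sub>v (\<sigma> (-g + h + g) *\<^sub>v v)"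
        using c vc by (metis assoc_mult_mat_vec)
      also have "\<sigma> (-g + h + g) *\<^sub>v v = v" using v k unfolding T_def by simp
      finally show ?thesis .
    qed
    then show "\<sigma> g *\<^sub>v v \<in> T" unfolding T_def using mult_mat_vec_carrier[OF c[of g] vc] by simp
  qed
  then have "T = {0\<^sub>v n} \<or> T = carrier_vec n" using irr unfolding irreducible_unitary_rep_def by simp
  then show ?thesis
  proof
    assume "T = {0\<^sub>v n}"
    then have "FT n \<sigma> = 0\<^sub>m n n" by (intro FT_zero[OF u]) (auto simp: T_def set_eq_iff)
    then show ?thesis using mat_rank_zero by simp
  next
    assume "T = carrier_vec n"
    then have "FT n \<sigma> = complex_of_real mH \<cdot>\<^sub>m 1\<^sub>m n" by (intro FT_one[OF u]) (auto simp: T_def set_eq_iff)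
    then show ?thesis using mat_rank_scalar_one[of "complex_of_real mH" n] mH_pos by simp
  qed
qed

lemma converse_rank:
  assumes u: "unitary_rep r \<tau>" and x: "x \<in> carrier_vec r" "x \<noteq> 0\<^sub>v r" "\<forall>h\<in>H. \<tau> h *\<^sub>v x = x"
    and y: "y \<in> carrier_vec r" and h: "h \<in> H" "\<tau> h *\<^sub>v y \<noteq> y"
  shows "mat_rank (FT r \<tau>) \<noteq> r \<and> mat_rank (FT r \<tau>) \<noteq> 0"
proof
  note c = unitary_rep_carrier[OF u]
  have "FT r \<tau> *\<^sub>v x = complex_of_real mH \<cdot>\<^sub>v x" using FT_fixed[OF u x(1) x(3)] .
  moreover have "complex_of_real mH \<cdot>\<^sub>v x \<noteq> 0\<^sub>v r"
  proof
    assume a: "complex_of_real mH \<cdot>\<^sub>v x = 0\<^sub>v r"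
    have "x = 0\<^sub>v r"
    proof (rule eq_vecI)
      fix i assume "i < dim_vec (0\<^sub>v r :: complex vec)"
      then have i: "i < r" by simp
      have "(complex_of_real mH \<cdot>\<^sub>v x) $ i = 0" using a i by simp
      then have "complex_of_real mH * x $ i = 0" using i x(1) by simp
      then show "x $ i = 0\<^sub>v r $ i" using mH_pos i by simp
    qed (use x(1) in simp)
    then show False using x by simp
  qed
  ultimately show "mat_rank (FT r \<tau>) \<noteq> 0" using mat_rank_nonzero[OF FT_carrier x(1)] by simp
next
  note c = unitary_rep_carrier[OF u]
  show "mat_rank (FT r \<tau>) \<noteq> r"
  proof
    assume rk: "mat_rank (FT r \<tau>) = r"
    have d: "\<tau> h *\<^sub>v y - y \<in> carrier_vec r" using mult_mat_vec_carrier[OF c[of h] y] y by simp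
    have "FT r \<tau> *\<^sub>v (\<tau> h *\<^sub>v y - y) = FT r \<tau> *\<^sub>v (\<tau> h *\<^sub>v y) - FT r \<tau> *\<^sub>v y"
      using mult_minus_distrib_mat_vec[OF FT_carrier[of r \<tau>] mult_mat_vec_carrier[OF c[of h] y] y] .
    also have "FT r \<tau> *\<^sub>v (\<tau> h *\<^sub>v y) = (FT r \<tau> * \<tau> h) *\<^sub>v y"
      by (rule assoc_mult_mat_vec[symmetric, OF FT_carrier c[of h] y])
    also have "\<dots> = FT r \<tau> *\<^sub>v y" using FT_right_inv[OF u h(1)] by simp
    finally have e: "FT r \<tau> *\<^sub>v (\<tau> h *\<^sub>v y - y) = FT r \<tau> *\<^sub>v y - FT r \<tau> *\<^sub>v y" .
    have "FT r \<tau> *\<^sub>v y - FT r \<tau> *\<^sub>v y = 0\<^sub>v r"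
      by (rule minus_cancel_vec[OF mult_mat_vec_carrier[OF FT_carrier[of r \<tau>] y]])
    with e have "FT r \<tau> *\<^sub>v (\<tau> h *\<^sub>v y - y) = 0\<^sub>v r" by (rule trans)
    then have "\<tau> h *\<^sub>v y - y = 0\<^sub>v r" using mat_rank_full_inj[OF FT_carrier rk d] by simp
    then have "\<tau> h *\<^sub>v y = y" by (rule vec_minus_eq0[OF mult_mat_vec_carrier[OF c[of h] y] y])
    then show False using h by simp
  qed
qed

end


lemma orth_basis_subspace:
  fixes W :: "complex vec set"
  assumes Wc: "W \<subseteq> carrier_vec m" and W0: "0\<^sub>v m \<in> W" and Wadd: "\<forall>v\<in>W. \<forall>w\<in>W. v + w \<in> W"
    and Wsm: "\<forall>c. \<forall>v\<in>W. c \<cdot>\<^sub>v v \<in> W" and Wne: "W \<noteq> carrier_vec m"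
  shows "\<exists>r B. r < m \<and> B \<in> carrier_mat m r \<and> mat_adjoint B * B = 1\<^sub>m r
     \<and> (\<forall>x\<in>carrier_vec r. B *\<^sub>v x \<in> W) \<and> (\<forall>w\<in>W. B *\<^sub>v (mat_adjoint B *\<^sub>v w) = w)"
proof -
  interpret vs: cof_vec_space m "TYPE(complex)" .
  have sub: "submodule class_ring W vs.V"
    by (rule submodule.intro) (use Wc W0 Wadd Wsm vs.module_axioms in \<open>auto simp: module_vec_simps\<close>)
  define P where "P S \<longleftrightarrow> S \<subseteq> W \<and> vs.lin_indpt S" for S
  have bnd: "finite S \<and> card S \<le> m" if "P S" for S
    using vs.li_le_dim[OF vs.fin_dim, of S] vs.dim_is_n Wc that unfolding P_def by auto
  have li0: "vs.lin_indpt {}" using vs.lin_dep_def by auto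
  have "P {}" unfolding P_def using li0 by simp
  then obtain S where S: "finite S" "maximal S P" using maximal_exists[of P m "{}"] bnd by blast
  have SW: "S \<subseteq> W" "vs.lin_indpt S" using S(2) unfolding maximal_def P_def by auto
  have SC: "S \<subseteq> carrier_vec m" using SW Wc by auto
  have spanS: "vs.span S = W"
  proof
    show "vs.span S \<subseteq> W" using vs.span_is_subset[OF SW(1) sub] .
    show "W \<subseteq> vs.span S"
    proof
      fix w assume w: "w \<in> W"
      show "w \<in> vs.span S"
      proof (rule ccontr)
        assume nw: "w \<notin> vs.span S"
        have "w \<notin> S" using nw vs.in_own_span[OF SC] by blast
        then have "vs.lin_indpt (S \<union> {w})" using vs.lin_dep_iff_in_span[OF SC SW(2), of w] nw w Wc by auto
        then have "P (S \<union> {w})" unfolding P_def using SW w by auto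
        then have "S \<union> {w} = S" using S(2) unfolding maximal_def by blast
        then show False using \<open>w \<notin> S\<close> by blast
      qed
    qed
  qed
  have cardS: "card S < m"
  proof (rule ccontr)
    assume "\<not> card S < m"
    then have "card S \<ge> vs.dim" using vs.dim_is_n by simp
    then have "vs.basis S" using vs.dim_li_is_basis[OF vs.fin_dim S(1) SC SW(2)] by simp
    then have "vs.span S = carrier_vec m" unfolding vs.basis_def by simp
    then show False using spanS Wne by simp
  qed
  obtain ws where ws: "set ws = S" "distinct ws" using finite_distinct_list[OF S(1)] by blast
  define us where "us = gram_schmidt m ws"
  have gs: "vs.span (set ws) = vs.span (set us)" "corthogonal us" "set us \<subseteq> carrier_vec m"
    "length us = length ws" "distinct us"
    using vs.gram_schmidt_result[OF _ ws(2) _ us_def] SC SW(2) ws(1) by auto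
  define r where "r = length us"
  have r: "r < m" using cardS ws distinct_card gs(4) unfolding r_def by metis
  have usc: "us ! i \<in> carrier_vec m" if "i < r" for i using gs(3) that unfolding r_def by auto
  have usp: "us ! i \<bullet>c us ! i \<noteq> 0" if "i < r" for i using corthogonalD[OF gs(2), of i i] that unfolding r_def by auto
  have usorth: "us ! j \<bullet>c us ! i = 0" if "i < r" "j < r" "i \<noteq> j" for i j
    using corthogonalD[OF gs(2), of j i] that unfolding r_def by auto
  have pos: "Re (us ! i \<bullet>c us ! i) > 0 \<and> us ! i \<bullet>c us ! i = complex_of_real (Re (us ! i \<bullet>c us ! i))"
    if i: "i < r" for i
  proof -
    have "us ! i \<noteq> 0\<^sub>v m" using usp[OF i] usc[OF i] by auto
    then have "us ! i \<bullet>c us ! i > 0" using conjugate_square_greater_0_vec[OF usc[OF i]] by simp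
    then show ?thesis by (simp add: less_complex_def complex_eq_iff)
  qed
  define cs where "cs i = complex_of_real (1 / sqrt (Re (us ! i \<bullet>c us ! i)))" for i
  define vv where "vv = map (\<lambda>i. cs i \<cdot>\<^sub>v us ! i) [0..<r]"
  define B where "B = mat_of_cols m vv"
  have lvv: "length vv = r" unfolding vv_def by simp
  have vvi: "vv ! i = cs i \<cdot>\<^sub>v us ! i" if "i < r" for i using that unfolding vv_def by simp
  have vvc: "set vv \<subseteq> carrier_vec m" unfolding vv_def using usc by auto
  have Bc: "B \<in> carrier_mat m r" unfolding B_def using mat_of_cols_carrier(1)[of m vv] lvv by simp
  have Bij: "B $$ (k, i) = cs i * us ! i $ k" if "k < m" "i < r" for k i
    unfolding B_def using that lvv vvi[OF that(2)] usc[OF that(2)] by (simp add: mat_of_cols_def)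
  have unit: "mat_adjoint B * B = 1\<^sub>m r"
  proof (rule eq_matI)
    fix i j assume "i < dim_row (1\<^sub>m r :: complex mat)" "j < dim_col (1\<^sub>m r :: complex mat)"
    then have i: "i < r" and j: "j < r" by auto
    have "(mat_adjoint B * B) $$ (i, j) = (\<Sum>k\<in>{0..<m}. cnj (B $$ (k,i)) * B $$ (k,j))"
      using Bc i j by (simp add: scalar_prod_def)
    also have "\<dots> = (\<Sum>k\<in>{0..<m}. cs i * cs j * (us ! j $ k * cnj (us ! i $ k)))"
      by (intro sum.cong refl) (simp add: Bij i j cs_def mult_ac)
    also have "\<dots> = cs i * cs j * (us ! j \<bullet>c us ! i)"
      using usc[OF i] usc[OF j] by (simp add: scalar_prod_def sum_distrib_left)
    also have "\<dots> = 1\<^sub>m r $$ (i, j)"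
    proof (cases "i = j")
      case True
      define a where "a = Re (us ! i \<bullet>c us ! i)"
      have a: "a > 0" "us ! i \<bullet>c us ! i = complex_of_real a" using pos[OF i] unfolding a_def by auto
      have sa: "sqrt a * sqrt a = a" using a(1) by simp
      have "1 / sqrt a * (1 / sqrt a) * a = 1" using a(1) sa by (simp add: field_simps)
      then have "complex_of_real (1 / sqrt a * (1 / sqrt a) * a) = 1" by simp
      then have "cs i * cs i * (us ! i \<bullet>c us ! i) = 1"
        unfolding cs_def a(2) a_def[symmetric] using sa by (simp flip: of_real_mult)
      then show ?thesis using True i by simp
    next
      case False
      then show ?thesis using usorth[OF i j False] i j by simp
    qed
    finally show "(mat_adjoint B * B) $$ (i, j) = 1\<^sub>m r $$ (i, j)" .
  qed (use Bc in simp_all)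
  have us_span: "set us \<subseteq> vs.span (set us)" using vs.in_own_span[OF gs(3)] .
  have us_W: "set us \<subseteq> W" using us_span gs(1) ws(1) spanS by auto
  have vv_W: "set vv \<subseteq> W"
  proof -
    have "cs i \<cdot>\<^sub>v us ! i \<in> W" if "i < length us" for i using Wsm us_W nth_mem[OF that] by blast
    then show ?thesis unfolding vv_def r_def by auto
  qed
  have spanvvW: "vs.span (set vv) \<subseteq> W" using vs.span_is_subset[OF vv_W sub] .
  have Bx: "B *\<^sub>v x \<in> W" if x: "x \<in> carrier_vec r" for x
  proof -
    have "vs.lincomb_list (\<lambda>i. x $ i) vv = mat_of_cols m vv *\<^sub>v vec (length vv) (\<lambda>i. x $ i)"
      using vvc by (intro vs.lincomb_list_as_mat_mult) auto
    also have "vec (length vv) (\<lambda>i. x $ i) = x" using x lvv by auto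
    finally have "B *\<^sub>v x = vs.lincomb_list (\<lambda>i. x $ i) vv" unfolding B_def by simp
    moreover have "vs.lincomb_list (\<lambda>i. x $ i) vv \<in> vs.span_list vv" by (rule vs.in_span_listI) auto
    ultimately show ?thesis using vs.span_list_as_span[OF vvc] spanvvW by auto
  qed
  have us_vv: "set us \<subseteq> vs.span (set vv)"
  proof
    fix u assume "u \<in> set us"
    then obtain i where i: "i < r" "u = us ! i" unfolding r_def by (auto simp: in_set_conv_nth)
    have csi: "cs i \<noteq> 0" unfolding cs_def using pos[OF i(1)] by simp
    have "vv ! i \<in> vs.span (set vv)" using vs.in_own_span[OF vvc] i lvv by auto
    then have "(1 / cs i) \<cdot>\<^sub>v vv ! i \<in> vs.span (set vv)" by (rule vs.smult_in_span[OF vvc])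
    moreover have "(1 / cs i) \<cdot>\<^sub>v vv ! i = u" using csi vvi[OF i(1)] i by (simp add: smult_smult_assoc)
    ultimately show "u \<in> vs.span (set vv)" by simp
  qed
  have W_vv: "W \<subseteq> vs.span (set vv)"
  proof -
    have "vs.span (set us) \<subseteq> vs.span (set vv)"
      using vs.span_is_subset[OF us_vv vs.span_is_submodule[OF vvc]] .
    then show ?thesis using gs(1) ws(1) spanS by auto
  qed
  have BBw: "B *\<^sub>v (mat_adjoint B *\<^sub>v w) = w" if w: "w \<in> W" for w
  proof -
    have "w \<in> vs.span_list vv" using W_vv w vs.span_list_as_span[OF vvc] by auto
    then obtain c where c: "w = vs.lincomb_list c vv" by (auto elim: vs.in_span_listE)
    also have "\<dots> = B *\<^sub>v vec r c" unfolding B_def lvv[symmetric] using vvc by (intro vs.lincomb_list_as_mat_mult) auto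
    finally have wB: "w = B *\<^sub>v vec r c" .
    have "mat_adjoint B *\<^sub>v (B *\<^sub>v vec r c) = (mat_adjoint B * B) *\<^sub>v vec r c"
      by (rule assoc_mult_mat_vec[symmetric, OF adj_carrier[OF Bc] Bc]) simp
    also have "\<dots> = vec r c" using unit by simp
    finally show ?thesis using wB by simp
  qed
  show ?thesis using r Bc unit Bx BBw by blast
qed



lemma cont_entries_left:
  fixes M :: "'a::topological_space \<Rightarrow> complex mat"
  assumes C: "C \<in> carrier_mat a m" and Mc: "\<And>g. M g \<in> carrier_mat m n"
    and cont: "\<And>i j. i < m \<Longrightarrow> j < n \<Longrightarrow> continuous_on UNIV (\<lambda>g. M g $$ (i,j))"
    and i: "i < a" and j: "j < n"
  shows "continuous_on UNIV (\<lambda>g. (C * M g) $$ (i,j))"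
proof -
  have "(C * M g) $$ (i,j) = (\<Sum>k\<in>{0..<m}. C $$ (i,k) * M g $$ (k,j))" for g
    using C Mc[of g] i j by (simp add: scalar_prod_def)
  moreover have "continuous_on UNIV (\<lambda>g. \<Sum>k\<in>{0..<m}. C $$ (i,k) * M g $$ (k,j))"
    using cont j by (intro continuous_on_sum continuous_on_mult continuous_on_const) auto
  ultimately show ?thesis by simp
qed

lemma cont_entries_right:
  fixes M :: "'a::topological_space \<Rightarrow> complex mat"
  assumes C: "C \<in> carrier_mat n b" and Mc: "\<And>g. M g \<in> carrier_mat m n"
    and cont: "\<And>i j. i < m \<Longrightarrow> j < n \<Longrightarrow> continuous_on UNIV (\<lambda>g. M g $$ (i,j))"
    and i: "i < m" and j: "j < b"
  shows "continuous_on UNIV (\<lambda>g. (M g * C) $$ (i,j))"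
proof -
  have "(M g * C) $$ (i,j) = (\<Sum>k\<in>{0..<n}. M g $$ (i,k) * C $$ (k,j))" for g
    using C Mc[of g] i j by (simp add: scalar_prod_def)
  moreover have "continuous_on UNIV (\<lambda>g. \<Sum>k\<in>{0..<n}. M g $$ (i,k) * C $$ (k,j))"
    using cont i by (intro continuous_on_sum continuous_on_mult continuous_on_const) auto
  ultimately show ?thesis by simp
qed

lemma subrep:
  fixes \<sigma> :: "'g::{group_add,topological_space} \<Rightarrow> complex mat"
  assumes u: "unitary_rep m \<sigma>" and inv: "invariant_subspace m \<sigma> W" and Wne: "W \<noteq> carrier_vec m"
  shows "\<exists>r B. r < m \<and> B \<in> carrier_mat m r \<and> mat_adjoint B * B = 1\<^sub>m r
     \<and> (\<forall>x\<in>carrier_vec r. B *\<^sub>v x \<in> W) \<and> (\<forall>w\<in>W. B *\<^sub>v (mat_adjoint B *\<^sub>v w) = w)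
     \<and> unitary_rep r (\<lambda>g. mat_adjoint B * (\<sigma> g * B))
     \<and> (\<forall>g. \<sigma> g * B = B * (mat_adjoint B * (\<sigma> g * B)))
     \<and> (\<forall>g. mat_adjoint B * \<sigma> g = (mat_adjoint B * (\<sigma> g * B)) * mat_adjoint B)"
proof -
  have Wc: "W \<subseteq> carrier_vec m" and W0: "0\<^sub>v m \<in> W" and Wadd: "\<forall>v\<in>W. \<forall>w\<in>W. v + w \<in> W"
    and Wsm: "\<forall>c. \<forall>v\<in>W. c \<cdot>\<^sub>v v \<in> W" and Winv: "\<forall>x. \<forall>v\<in>W. \<sigma> x *\<^sub>v v \<in> W"
    using inv unfolding invariant_subspace_def by auto
  obtain r B where r: "r < m" and Bc: "B \<in> carrier_mat m r" and unit: "mat_adjoint B * B = 1\<^sub>m r"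
    and Bx: "\<forall>x\<in>carrier_vec r. B *\<^sub>v x \<in> W" and BB: "\<forall>w\<in>W. B *\<^sub>v (mat_adjoint B *\<^sub>v w) = w"
    using orth_basis_subspace[OF Wc W0 Wadd Wsm Wne] by blast
  define A where "A = mat_adjoint B"
  have Ac: "A \<in> carrier_mat r m" unfolding A_def using Bc by simp
  note c = unitary_rep_carrier[OF u]
  define \<tau> where "\<tau> g = A * (\<sigma> g * B)" for g
  have tc: "\<tau> g \<in> carrier_mat r r" for g unfolding \<tau>_def using Ac c[of g] Bc by simp
  have P1: "\<sigma> g * B = B * \<tau> g" for g
  proof (rule mat_eq_on_vecs)
    show "\<sigma> g * B \<in> carrier_mat m r" using c[of g] Bc by simp
    show "B * \<tau> g \<in> carrier_mat m r" using tc[of g] Bc by simp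
    fix x :: "complex vec" assume x: "x \<in> carrier_vec r"
    have Bxc: "B *\<^sub>v x \<in> carrier_vec m" using Bc x by simp
    have "(\<sigma> g * B) *\<^sub>v x = \<sigma> g *\<^sub>v (B *\<^sub>v x)" using assoc_mult_mat_vec[OF c[of g] Bc x] .
    also have "\<dots> = B *\<^sub>v (A *\<^sub>v (\<sigma> g *\<^sub>v (B *\<^sub>v x)))" unfolding A_def
      using BB Winv Bx x by simp
    also have "A *\<^sub>v (\<sigma> g *\<^sub>v (B *\<^sub>v x)) = \<tau> g *\<^sub>v x" unfolding \<tau>_def
      using assoc_mult_mat_vec[OF Ac mult_carrier_mat[OF c[of g] Bc] x] assoc_mult_mat_vec[OF c[of g] Bc x]
      by simp
    also have "B *\<^sub>v (\<tau> g *\<^sub>v x) = (B * \<tau> g) *\<^sub>v x" using assoc_mult_mat_vec[OF Bc tc x] by simp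
    finally show "(\<sigma> g * B) *\<^sub>v x = (B * \<tau> g) *\<^sub>v x" .
  qed
  have P2: "\<tau> (g + g') = \<tau> g * \<tau> g'" for g g'
  proof -
    have "\<tau> g * \<tau> g' = A * ((\<sigma> g * B) * \<tau> g')" unfolding \<tau>_def[of g]
      by (rule assoc_mult_mat[OF Ac mult_carrier_mat[OF c[of g] Bc] tc])
    also have "(\<sigma> g * B) * \<tau> g' = \<sigma> g * (B * \<tau> g')"
      by (rule assoc_mult_mat[OF c[of g] Bc tc])
    also have "B * \<tau> g' = \<sigma> g' * B" using P1 by simp
    also have "\<sigma> g * (\<sigma> g' * B) = (\<sigma> g * \<sigma> g') * B"
      by (rule assoc_mult_mat[symmetric, OF c[of g] c[of g'] Bc])
    finally show ?thesis unfolding \<tau>_def using unitary_rep_hom[OF u] by simp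
  qed
  have P0: "\<tau> 0 = 1\<^sub>m r"
    unfolding \<tau>_def using unitary_rep_zero[OF u] Bc unit unfolding A_def by simp
  have adjt: "mat_adjoint (\<tau> g) = \<tau> (-g)" for g
  proof -
    have "mat_adjoint (\<tau> g) = mat_adjoint (\<sigma> g * B) * mat_adjoint A"
      unfolding \<tau>_def by (rule adj_mult[OF Ac mult_carrier_mat[OF c[of g] Bc]])
    also have "mat_adjoint (\<sigma> g * B) = A * mat_adjoint (\<sigma> g)"
      unfolding A_def by (rule adj_mult[OF c[of g] Bc])
    also have "mat_adjoint (\<sigma> g) = \<sigma> (-g)" using unitary_rep_inv(3)[OF u] .
    also have "mat_adjoint A = B" unfolding A_def by simp
    also have "A * \<sigma> (-g) * B = A * (\<sigma> (-g) * B)" by (rule assoc_mult_mat[OF Ac c Bc])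
    finally show ?thesis unfolding \<tau>_def .
  qed
  have tu: "unitary_rep r \<tau>"
    unfolding unitary_rep_def
  proof (intro conjI allI impI)
    fix x show "\<tau> x \<in> carrier_mat r r" by (rule tc)
    show "mat_adjoint (\<tau> x) * \<tau> x = 1\<^sub>m r" using adjt P2[of "-x" x] P0 by simp
  next
    fix x y show "\<tau> (x + y) = \<tau> x * \<tau> y" by (rule P2)
  next
    fix i j assume i: "i < r" and j: "j < r"
    have cont2: "continuous_on UNIV (\<lambda>g. (\<sigma> g * B) $$ (k, l))" if "k < m" "l < r" for k l
      by (rule cont_entries_right[OF Bc c unitary_rep_cont[OF u] that])
    have Mc: "\<sigma> g * B \<in> carrier_mat m r" for g using mult_carrier_mat[OF c Bc] .
    show "continuous_on UNIV (\<lambda>x. \<tau> x $$ (i, j))" unfolding \<tau>_def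
      using cont_entries_left[OF Ac Mc cont2 i j] .
  qed
  have P5: "A * \<sigma> g = \<tau> g * A" for g
  proof -
    have "mat_adjoint (\<sigma> (-g) * B) = mat_adjoint (B * \<tau> (-g))" using P1[of "-g"] by simp
    moreover have "mat_adjoint (\<sigma> (-g) * B) = A * \<sigma> g"
      using adj_mult[OF c[of "-g"] Bc] unitary_rep_inv(3)[OF u, of "-g"] unfolding A_def by simp
    moreover have "mat_adjoint (B * \<tau> (-g)) = \<tau> g * A"
      using adj_mult[OF Bc tc[of "-g"]] adjt[of "-g"] unfolding A_def by simp
    ultimately show ?thesis by simp
  qed
  show ?thesis
    using r Bc unit Bx BB tu P1 P5 unfolding A_def \<tau>_def by blast
qed


definition fixedv :: "('g \<Rightarrow> complex mat) \<Rightarrow> 'g set \<Rightarrow> complex vec \<Rightarrow> bool" where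
  "fixedv \<sigma> H v \<longleftrightarrow> (\<forall>h\<in>H. \<sigma> h *\<^sub>v v = v)"

lemma fixed_add: assumes "\<And>g. \<sigma> g \<in> carrier_mat m m" "a \<in> carrier_vec m" "b \<in> carrier_vec m"
  "fixedv \<sigma> H a" "fixedv \<sigma> H b" shows "fixedv \<sigma> H (a + b)"
  using assms mult_add_distrib_mat_vec[OF assms(1) assms(2,3)] unfolding fixedv_def by simp

lemma fixed_minus: assumes "\<And>g. \<sigma> g \<in> carrier_mat m m" "a \<in> carrier_vec m" "b \<in> carrier_vec m"
  "fixedv \<sigma> H a" "fixedv \<sigma> H b" shows "fixedv \<sigma> H (a - b)"
  using assms mult_minus_distrib_mat_vec[OF assms(1) assms(2,3)] unfolding fixedv_def by simp

lemma transfer_fixed: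
  fixes \<sigma> :: "'g::{group_add,topological_space} \<Rightarrow> complex mat"
  assumes u: "unitary_rep m \<sigma>" and Bc: "B \<in> carrier_mat m r" and unit: "mat_adjoint B * B = 1\<^sub>m r"
    and BB: "B *\<^sub>v (mat_adjoint B *\<^sub>v w) = w"
    and P1: "\<forall>g. \<sigma> g * B = B * (mat_adjoint B * (\<sigma> g * B))"
    and w: "w \<in> carrier_vec m" "fixedv \<sigma> H w" "\<not> fixedv \<sigma> H (\<sigma> g *\<^sub>v w)"
  shows "mat_adjoint B *\<^sub>v w \<in> carrier_vec r \<and> fixedv (\<lambda>g. mat_adjoint B * (\<sigma> g * B)) H (mat_adjoint B *\<^sub>v w)
    \<and> \<not> fixedv (\<lambda>g. mat_adjoint B * (\<sigma> g * B)) H ((mat_adjoint B * (\<sigma> g * B)) *\<^sub>v (mat_adjoint B *\<^sub>v w))"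
proof -
  define A where "A = mat_adjoint B"
  define \<tau> where "\<tau> g = A * (\<sigma> g * B)" for g
  have Ac: "A \<in> carrier_mat r m" unfolding A_def using Bc by simp
  note c = unitary_rep_carrier[OF u]
  have tc: "\<tau> g \<in> carrier_mat r r" for g unfolding \<tau>_def using Ac c[of g] Bc by simp
  define x where "x = A *\<^sub>v w"
  have xc: "x \<in> carrier_vec r" unfolding x_def using Ac w by simp
  have wx: "B *\<^sub>v x = w" using BB unfolding x_def A_def .
  have key: "\<sigma> k *\<^sub>v (B *\<^sub>v y) = B *\<^sub>v (\<tau> k *\<^sub>v y)" if y: "y \<in> carrier_vec r" for k y
  proof -
    have "\<sigma> k *\<^sub>v (B *\<^sub>v y) = (\<sigma> k * B) *\<^sub>v y" using assoc_mult_mat_vec[OF c[of k] Bc y] by simp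
    also have "\<dots> = (B * \<tau> k) *\<^sub>v y" using P1 unfolding \<tau>_def A_def by simp
    also have "\<dots> = B *\<^sub>v (\<tau> k *\<^sub>v y)" using assoc_mult_mat_vec[OF Bc tc y] .
    finally show ?thesis .
  qed
  have tact: "\<tau> k *\<^sub>v y = A *\<^sub>v (\<sigma> k *\<^sub>v (B *\<^sub>v y))" if y: "y \<in> carrier_vec r" for k y
    unfolding \<tau>_def using assoc_mult_mat_vec[OF Ac mult_carrier_mat[OF c[of k] Bc] y] assoc_mult_mat_vec[OF c[of k] Bc y]
    by simp
  have fx: "fixedv \<tau> H x" unfolding fixedv_def
  proof
    fix h assume h: "h \<in> H"
    have "\<tau> h *\<^sub>v x = A *\<^sub>v (\<sigma> h *\<^sub>v w)" using tact[OF xc] wx by simp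
    also have "\<dots> = x" using w(2) h unfolding fixedv_def x_def by simp
    finally show "\<tau> h *\<^sub>v x = x" .
  qed
  have nfx: "\<not> fixedv \<tau> H (\<tau> g *\<^sub>v x)"
  proof
    assume a: "fixedv \<tau> H (\<tau> g *\<^sub>v x)"
    have "fixedv \<sigma> H (\<sigma> g *\<^sub>v w)" unfolding fixedv_def
    proof
      fix h assume h: "h \<in> H"
      have tgx: "\<tau> g *\<^sub>v x \<in> carrier_vec r" using mult_mat_vec_carrier[OF tc xc] .
      have "\<sigma> h *\<^sub>v (\<sigma> g *\<^sub>v w) = \<sigma> h *\<^sub>v (B *\<^sub>v (\<tau> g *\<^sub>v x))" using key[OF xc] wx by simp
      also have "\<dots> = B *\<^sub>v (\<tau> h *\<^sub>v (\<tau> g *\<^sub>v x))" using key[OF tgx] .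
      also have "\<dots> = B *\<^sub>v (\<tau> g *\<^sub>v x)" using a h unfolding fixedv_def by simp
      also have "\<dots> = \<sigma> g *\<^sub>v w" using key[OF xc] wx by simp
      finally show "\<sigma> h *\<^sub>v (\<sigma> g *\<^sub>v w) = \<sigma> g *\<^sub>v w" .
    qed
    then show False using w(3) by simp
  qed
  show ?thesis using xc fx nfx unfolding x_def \<tau>_def A_def by simp
qed


lemma not_irreducible_split:
  assumes u: "unitary_rep m \<sigma>" and m: "m > 0" and ni: "\<not> irreducible_unitary_rep m \<sigma>"
  shows "\<exists>W. invariant_subspace m \<sigma> W \<and> W \<noteq> {0\<^sub>v m} \<and> W \<noteq> carrier_vec m"
  using assms unfolding irreducible_unitary_rep_def by blast

lemma reduce:
  fixes H :: "'g::{group_add,topological_space} set"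
  shows "\<forall>(\<sigma> :: 'g \<Rightarrow> complex mat) v g. unitary_rep m \<sigma> \<longrightarrow> v \<in> carrier_vec m \<longrightarrow> fixedv \<sigma> H v \<longrightarrow>
    \<not> fixedv \<sigma> H (\<sigma> g *\<^sub>v v) \<longrightarrow>
    (\<exists>r (\<tau> :: 'g \<Rightarrow> complex mat) x g'. irreducible_unitary_rep r \<tau> \<and> x \<in> carrier_vec r \<and> fixedv \<tau> H x
        \<and> \<not> fixedv \<tau> H (\<tau> g' *\<^sub>v x))"
proof (induction m rule: less_induct)
  case (less m)
  show ?case
  proof (intro allI impI)
    fix \<sigma> :: "'g \<Rightarrow> complex mat" and v g
    assume u: "unitary_rep m \<sigma>" and v: "v \<in> carrier_vec m" and fv: "fixedv \<sigma> H v"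
      and nfv: "\<not> fixedv \<sigma> H (\<sigma> g *\<^sub>v v)"
    note c = unitary_rep_carrier[OF u]
    have gvc: "\<sigma> g *\<^sub>v v \<in> carrier_vec m" using mult_mat_vec_carrier[OF c v] .
    have m: "m > 0"
    proof (rule ccontr)
      assume "\<not> m > 0"
      then have m0: "m = 0" by simp
      have "\<sigma> k *\<^sub>v x = x" if "x \<in> carrier_vec 0" for k x
      proof -
        have "x = 0\<^sub>v 0" using that by auto
        then show ?thesis using mat_vec_zero[OF c[of k, unfolded m0]] by simp
      qed
      then have "fixedv \<sigma> H (\<sigma> g *\<^sub>v v)" unfolding fixedv_def using gvc m0 by simp
      then show False using nfv by simp
    qed
    show "\<exists>r (\<tau> :: 'g \<Rightarrow> complex mat) x g'. irreducible_unitary_rep r \<tau> \<and> x \<in> carrier_vec r \<and> fixedv \<tau> H x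
        \<and> \<not> fixedv \<tau> H (\<tau> g' *\<^sub>v x)"
    proof (cases "irreducible_unitary_rep m \<sigma>")
      case True
      then show ?thesis using v fv nfv by blast
    next
      case False
      obtain W where inv: "invariant_subspace m \<sigma> W" and W0: "W \<noteq> {0\<^sub>v m}" and Wne: "W \<noteq> carrier_vec m"
        using not_irreducible_split[OF u m False] by blast
      have Wc: "W \<subseteq> carrier_vec m" and Wz: "0\<^sub>v m \<in> W" using inv unfolding invariant_subspace_def by auto
      obtain r B where r: "r < m" and Bc: "B \<in> carrier_mat m r" and unit: "mat_adjoint B * B = 1\<^sub>m r"
        and Bx: "\<forall>x\<in>carrier_vec r. B *\<^sub>v x \<in> W" and BB: "\<forall>w\<in>W. B *\<^sub>v (mat_adjoint B *\<^sub>v w) = w"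
        and tu: "unitary_rep r (\<lambda>g. mat_adjoint B * (\<sigma> g * B))"
        and P1: "\<forall>g. \<sigma> g * B = B * (mat_adjoint B * (\<sigma> g * B))"
        and P5: "\<forall>g. mat_adjoint B * \<sigma> g = (mat_adjoint B * (\<sigma> g * B)) * mat_adjoint B"
        using subrep[OF u inv Wne] by blast
      define A where "A = mat_adjoint B"
      define \<tau> where "\<tau> g = A * (\<sigma> g * B)" for g
      have Ac: "A \<in> carrier_mat r m" unfolding A_def using Bc by simp
      have tc: "\<tau> k \<in> carrier_mat r r" for k unfolding \<tau>_def using Ac c[of k] Bc by simp
      define P where "P y = B *\<^sub>v (A *\<^sub>v y)" for y
      have Pc: "P y \<in> carrier_vec m" if "y \<in> carrier_vec m" for y
        unfolding P_def using mult_mat_vec_carrier[OF Bc mult_mat_vec_carrier[OF Ac that]] .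
      have comm: "\<sigma> h *\<^sub>v P y = P (\<sigma> h *\<^sub>v y)" if y: "y \<in> carrier_vec m" for h y
      proof -
        have Ay: "A *\<^sub>v y \<in> carrier_vec r" using Ac y by simp
        have "\<sigma> h *\<^sub>v P y = (\<sigma> h * B) *\<^sub>v (A *\<^sub>v y)" unfolding P_def using assoc_mult_mat_vec[OF c[of h] Bc Ay] by simp
        also have "\<dots> = (B * \<tau> h) *\<^sub>v (A *\<^sub>v y)" using P1 unfolding \<tau>_def A_def by simp
        also have "\<dots> = B *\<^sub>v (\<tau> h *\<^sub>v (A *\<^sub>v y))" using assoc_mult_mat_vec[OF Bc tc Ay] .
        also have "\<tau> h *\<^sub>v (A *\<^sub>v y) = (\<tau> h * A) *\<^sub>v y" using assoc_mult_mat_vec[OF tc Ac y] by simp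
        also have "\<tau> h * A = A * \<sigma> h" using P5 unfolding \<tau>_def A_def by simp
        also have "(A * \<sigma> h) *\<^sub>v y = A *\<^sub>v (\<sigma> h *\<^sub>v y)" using assoc_mult_mat_vec[OF Ac c[of h] y] .
        finally show ?thesis unfolding P_def .
      qed
      define W' where "W' = {x \<in> carrier_vec m. A *\<^sub>v x = 0\<^sub>v r}"
      have inv': "invariant_subspace m \<sigma> W'"
        unfolding invariant_subspace_def
      proof (intro conjI ballI allI)
        show "W' \<subseteq> carrier_vec m" unfolding W'_def by auto
        show "0\<^sub>v m \<in> W'" unfolding W'_def using mat_vec_zero[OF Ac] by simp
      next
        fix a b assume "a \<in> W'" "b \<in> W'"
        then show "a + b \<in> W'" unfolding W'_def using mult_add_distrib_mat_vec[OF Ac] by simp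
      next
        fix k a assume "a \<in> W'"
        then show "k \<cdot>\<^sub>v a \<in> W'" unfolding W'_def using mult_mat_vec[OF Ac] by simp
      next
        fix k a assume a: "a \<in> W'"
        have ac: "a \<in> carrier_vec m" using a unfolding W'_def by simp
        have "A *\<^sub>v (\<sigma> k *\<^sub>v a) = (A * \<sigma> k) *\<^sub>v a" using assoc_mult_mat_vec[OF Ac c[of k] ac] by simp
        also have "A * \<sigma> k = \<tau> k * A" using P5 unfolding \<tau>_def A_def by simp
        also have "(\<tau> k * A) *\<^sub>v a = \<tau> k *\<^sub>v (A *\<^sub>v a)" using assoc_mult_mat_vec[OF tc Ac ac] .
        also have "\<dots> = 0\<^sub>v r" using a mat_vec_zero[OF tc] unfolding W'_def by simp
        finally show "\<sigma> k *\<^sub>v a \<in> W'" unfolding W'_def using mult_mat_vec_carrier[OF c ac] by simp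
      qed
      have W'ne: "W' \<noteq> carrier_vec m"
      proof
        assume e: "W' = carrier_vec m"
        obtain w where w: "w \<in> W" "w \<noteq> 0\<^sub>v m" using W0 Wz by blast
        have "w \<in> W'" using e w Wc by auto
        then have "A *\<^sub>v w = 0\<^sub>v r" unfolding W'_def by simp
        moreover have "B *\<^sub>v (A *\<^sub>v w) = w" using BB w(1) unfolding A_def by simp
        ultimately have "w = B *\<^sub>v 0\<^sub>v r" by simp
        then show False using w(2) mat_vec_zero[OF Bc] by simp
      qed
      define w1 where "w1 = P v"
      define w2 where "w2 = v - w1"
      have w1c: "w1 \<in> carrier_vec m" unfolding w1_def using Pc[OF v] .
      have w2c: "w2 \<in> carrier_vec m" unfolding w2_def using w1c v by simp
      have w1W: "w1 \<in> W" unfolding w1_def P_def using Bx Ac v by simp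
      have w2W': "w2 \<in> W'"
      proof -
        have Av: "A *\<^sub>v v \<in> carrier_vec r" using Ac v by simp
        have "A *\<^sub>v w1 = (A * B) *\<^sub>v (A *\<^sub>v v)" unfolding w1_def P_def using assoc_mult_mat_vec[OF Ac Bc Av] by simp
        also have "\<dots> = A *\<^sub>v v" using unit Av unfolding A_def by simp
        finally have "A *\<^sub>v w2 = A *\<^sub>v v - A *\<^sub>v v" unfolding w2_def using mult_minus_distrib_mat_vec[OF Ac v w1c] by simp
        then show ?thesis unfolding W'_def using w2c minus_cancel_vec[OF Av] by simp
      qed
      have fw1: "fixedv \<sigma> H w1" unfolding fixedv_def w1_def using comm[OF v] fv unfolding fixedv_def by simp
      have fw2: "fixedv \<sigma> H w2" unfolding w2_def by (rule fixed_minus[where \<sigma>=\<sigma> and m=m and H=H, OF c v w1c fv fw1])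
      have vsum: "v = w1 + w2"
      proof (rule eq_vecI)
        fix i assume "i < dim_vec (w1 + w2)"
        then have i: "i < m" using w2c by simp
        show "v $ i = (w1 + w2) $ i" using i v w1c w2c unfolding w2_def by simp
      qed (use v w2c in simp)
      have gv0: "\<sigma> g *\<^sub>v (w1 + w2) = \<sigma> g *\<^sub>v w1 + \<sigma> g *\<^sub>v w2"
        by (rule mult_add_distrib_mat_vec[OF c w1c w2c])
      have gv: "\<sigma> g *\<^sub>v v = \<sigma> g *\<^sub>v w1 + \<sigma> g *\<^sub>v w2" using gv0 vsum by simp
      have "\<not> fixedv \<sigma> H (\<sigma> g *\<^sub>v w1) \<or> \<not> fixedv \<sigma> H (\<sigma> g *\<^sub>v w2)"
      proof (rule ccontr)
        assume "\<not> ?thesis"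
        then have "fixedv \<sigma> H (\<sigma> g *\<^sub>v w1 + \<sigma> g *\<^sub>v w2)"
          using fixed_add[where \<sigma>=\<sigma> and m=m and H=H, OF c mult_mat_vec_carrier[OF c w1c] mult_mat_vec_carrier[OF c w2c]] by blast
        then show False using gv nfv by simp
      qed
      then show ?thesis
      proof
        assume n1: "\<not> fixedv \<sigma> H (\<sigma> g *\<^sub>v w1)"
        have tr: "mat_adjoint B *\<^sub>v w1 \<in> carrier_vec r \<and> fixedv (\<lambda>g. mat_adjoint B * (\<sigma> g * B)) H (mat_adjoint B *\<^sub>v w1)
          \<and> \<not> fixedv (\<lambda>g. mat_adjoint B * (\<sigma> g * B)) H ((mat_adjoint B * (\<sigma> g * B)) *\<^sub>v (mat_adjoint B *\<^sub>v w1))"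
          by (rule transfer_fixed[OF u Bc unit _ P1 w1c fw1 n1]) (use BB w1W in simp)
        show ?thesis using less.IH[OF r] tu tr by blast
      next
        assume n2: "\<not> fixedv \<sigma> H (\<sigma> g *\<^sub>v w2)"
        obtain r' B' where r': "r' < m" and Bc': "B' \<in> carrier_mat m r'" and unit': "mat_adjoint B' * B' = 1\<^sub>m r'"
          and BB': "\<forall>w\<in>W'. B' *\<^sub>v (mat_adjoint B' *\<^sub>v w) = w"
          and tu': "unitary_rep r' (\<lambda>g. mat_adjoint B' * (\<sigma> g * B'))"
          and P1': "\<forall>g. \<sigma> g * B' = B' * (mat_adjoint B' * (\<sigma> g * B'))"
          using subrep[OF u inv' W'ne] by blast
        have tr: "mat_adjoint B' *\<^sub>v w2 \<in> carrier_vec r' \<and> fixedv (\<lambda>g. mat_adjoint B' * (\<sigma> g * B')) H (mat_adjoint B' *\<^sub>v w2)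
          \<and> \<not> fixedv (\<lambda>g. mat_adjoint B' * (\<sigma> g * B')) H ((mat_adjoint B' * (\<sigma> g * B')) *\<^sub>v (mat_adjoint B' *\<^sub>v w2))"
          by (rule transfer_fixed[OF u Bc' unit' _ P1' w2c fw2 n2]) (use BB' w2W' in simp)
        show ?thesis using less.IH[OF r'] tu' tr by blast
      qed
    qed
  qed
qed



lemma clopen_if_cont:
  assumes "closed S" "closed (- S)"
  shows "continuous_on UNIV (\<lambda>x. if x \<in> S then (1::complex) else 0)"
proof -
  have "continuous_on (S \<union> - S) (\<lambda>x. if x \<in> S then (1::complex) else 0)"
    using assms by (intro continuous_on_cases continuous_on_const) auto
  then show ?thesis by simp
qed

context cgH begin

definition act :: "'g \<Rightarrow> 'g set \<Rightarrow> 'g set" where "act g C = (\<lambda>x. g + x) ` C"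

lemma act_act: "act g (act g' C) = act (g + g') C"
  unfolding act_def image_image by (simp add: add.assoc)

lemma act_zero[simp]: "act 0 C = C" unfolding act_def by simp

lemma act_inv: "act (-g) (act g C) = C" using act_act[of "-g" g C] by simp

lemma act_eq_iff: "act g C = D \<longleftrightarrow> C = act (-g) D"
  using act_inv[of g C] act_inv[of "-g" D] by auto

lemma cosets_act: assumes "C \<in> left_cosets H" shows "act g C \<in> left_cosets H"
proof -
  obtain a where a: "C = (\<lambda>x. a + x) ` H" using assms unfolding left_cosets_def by auto
  have "act g C = (\<lambda>x. (g + a) + x) ` H" unfolding a act_def image_image by (simp add: add.assoc)
  then show ?thesis unfolding left_cosets_def by blast
qed

lemma H_coset: "H \<in> left_cosets H"
  unfolding left_cosets_def by (auto intro!: exI[of _ 0])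

lemma coset_eq_iff: "act a H = act b H \<longleftrightarrow> -b + a \<in> H"
proof
  assume e: "act a H = act b H"
  have "a \<in> act a H" unfolding act_def using H0 by (auto intro: rev_image_eqI[of 0])
  then have "a \<in> act b H" using e by simp
  then obtain h where "h \<in> H" "a = b + h" unfolding act_def by auto
  then show "-b + a \<in> H" by (simp add: add.assoc[symmetric])
next
  assume a: "-b + a \<in> H"
  have "act a H = act b (act (-b + a) H)" by (simp add: act_act add.assoc[symmetric])
  also have "act (-b + a) H = H"
  proof
    show "act (-b + a) H \<subseteq> H" unfolding act_def using Hadd a by auto
    show "H \<subseteq> act (-b + a) H"
    proof
      fix x assume x: "x \<in> H"
      have "- (-b + a) + x \<in> H" using Hadd Hneg a x by blast
      moreover have "x = (-b + a) + (- (-b + a) + x)" by (simp add: add.assoc[symmetric])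
      ultimately show "x \<in> act (-b + a) H" unfolding act_def by blast
    qed
  qed
  finally show "act a H = act b H" .
qed

lemma H_open_compl: "closed (- H)"
proof -
  have "- H = \<Union> {C \<in> left_cosets H. C \<noteq> H}"
  proof
    show "- H \<subseteq> \<Union> {C \<in> left_cosets H. C \<noteq> H}"
    proof
      fix x assume x: "x \<in> - H"
      have "x \<in> act x H" unfolding act_def using H0 by (auto intro: rev_image_eqI[of 0])
      moreover have "act x H \<in> left_cosets H" unfolding left_cosets_def act_def by blast
      moreover have "act x H \<noteq> H" using \<open>x \<in> act x H\<close> x by auto
      ultimately show "x \<in> \<Union> {C \<in> left_cosets H. C \<noteq> H}" by blast
    qed
    show "\<Union> {C \<in> left_cosets H. C \<noteq> H} \<subseteq> - H"
    proof
      fix x assume "x \<in> \<Union> {C \<in> left_cosets H. C \<noteq> H}"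
      then obtain a where a: "act a H \<noteq> H" "x \<in> act a H" unfolding left_cosets_def act_def by auto
      show "x \<in> - H"
      proof
        assume xH: "x \<in> H"
        obtain h where h: "h \<in> H" "x = a + h" using a(2) unfolding act_def by auto
        have "a = x + - h" using h by (simp add: add.assoc)
        then have "a \<in> H" using Hadd[OF xH Hneg[OF h(1)]] by simp
        then have "act a H = act 0 H" using coset_eq_iff[of a 0] by simp
        then show False using a(1) by simp
      qed
    qed
  qed
  moreover have "closed (\<Union> {C \<in> left_cosets H. C \<noteq> H})"
  proof (rule closed_Union)
    show "finite {C \<in> left_cosets H. C \<noteq> H}" using fin by simp
    show "\<forall>S\<in>{C \<in> left_cosets H. C \<noteq> H}. closed S"
      unfolding left_cosets_def using closed_transl[OF clo] by auto
  qed
  ultimately show ?thesis by simp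
qed

lemma cont_coset_test:
  "continuous_on UNIV (\<lambda>g. if act g (act a H) = act b H then (1::complex) else 0)"
proof -
  define \<phi> where "\<phi> g = -b + g + a" for g
  have cphi: "continuous_on UNIV \<phi>" unfolding \<phi>_def
    by (intro cont_add2 continuous_on_const continuous_on_id)
  have e: "act g (act a H) = act b H \<longleftrightarrow> g \<in> \<phi> -` H" for g
    unfolding act_act coset_eq_iff \<phi>_def by (simp add: add.assoc)
  have "closed (\<phi> -` H)" using cphi clo by (simp add: closed_vimage continuous_on_eq_continuous_at)
  moreover have "closed (- (\<phi> -` H))"
    using cphi H_open_compl by (simp add: closed_vimage continuous_on_eq_continuous_at vimage_Compl[symmetric])
  ultimately show ?thesis unfolding e by (rule clopen_if_cont)
qed


definition "kk = card (left_cosets H)"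
definition "cc = (SOME c. bij_betw c {0..<kk} (left_cosets H))"
definition "idx C = the_inv_into {0..<kk} cc C"

lemma cc_bij: "bij_betw cc {0..<kk} (left_cosets H)"
proof -
  have "\<exists>c. bij_betw c {0..<kk} (left_cosets H)" unfolding kk_def using ex_bij_betw_nat_finite[OF fin] .
  then show ?thesis unfolding cc_def by (rule someI_ex)
qed

lemma cc_in: "i < kk \<Longrightarrow> cc i \<in> left_cosets H" using cc_bij unfolding bij_betw_def by auto

lemma idx_props: "C \<in> left_cosets H \<Longrightarrow> idx C < kk \<and> cc (idx C) = C"
  unfolding idx_def using cc_bij
  by (metis atLeastLessThan_iff bij_betw_def f_the_inv_into_f the_inv_into_into subset_refl)

lemma idx_cc: "i < kk \<Longrightarrow> idx (cc i) = i"
  unfolding idx_def using cc_bij by (simp add: bij_betw_def the_inv_into_f_f)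

lemma cc_eq_iff: "i < kk \<Longrightarrow> C \<in> left_cosets H \<Longrightarrow> cc i = C \<longleftrightarrow> i = idx C"
  using idx_props idx_cc by metis

definition "prep g = mat kk kk (\<lambda>(i,j). if act g (cc j) = cc i then (1::complex) else 0)"

lemma prep_carrier: "prep g \<in> carrier_mat kk kk" unfolding prep_def by simp

lemma prep_unit: assumes j: "j < kk"
  shows "prep g *\<^sub>v unit_vec kk j = unit_vec kk (idx (act g (cc j)))"
proof (rule eq_vecI)
  fix i assume "i < dim_vec (unit_vec kk (idx (act g (cc j))))"
  then have i: "i < kk" by simp
  have C: "act g (cc j) \<in> left_cosets H" using cosets_act cc_in j by blast
  have "(prep g *\<^sub>v unit_vec kk j) $ i = prep g $$ (i, j)"
    using i j prep_carrier[of g] by simp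
  also have "\<dots> = (if cc i = act g (cc j) then 1 else 0)" unfolding prep_def using i j by auto
  also have "\<dots> = unit_vec kk (idx (act g (cc j))) $ i" using cc_eq_iff[OF i C] i by (simp add: unit_vec_def)
  finally show "(prep g *\<^sub>v unit_vec kk j) $ i = unit_vec kk (idx (act g (cc j))) $ i" .
qed (simp add: prep_def)

lemma mat_eq_units: assumes "(A::complex mat) \<in> carrier_mat n n" "B \<in> carrier_mat n n"
  "\<And>j. j < n \<Longrightarrow> A *\<^sub>v unit_vec n j = B *\<^sub>v unit_vec n j"
shows "A = B"
proof (rule mat_col_eqI)
  fix j assume "j < dim_col B"
  then have j: "j < n" using assms by simp
  show "col A j = col B j" using assms(3)[OF j] mult_unit_vec_col[OF assms(1) j] mult_unit_vec_col[OF assms(2) j] by simp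
qed (use assms in simp_all)

lemma prep_hom: "prep (g + g') = prep g * prep g'"
proof (rule mat_eq_units[OF prep_carrier mult_carrier_mat[OF prep_carrier prep_carrier]])
  fix j assume j: "j < kk"
  have C: "act g' (cc j) \<in> left_cosets H" using cosets_act cc_in j by blast
  have "(prep g * prep g') *\<^sub>v unit_vec kk j = prep g *\<^sub>v (prep g' *\<^sub>v unit_vec kk j)"
    using assoc_mult_mat_vec[OF prep_carrier prep_carrier unit_vec_carrier] .
  also have "\<dots> = unit_vec kk (idx (act g (act g' (cc j))))"
    using prep_unit[OF j] prep_unit[of "idx (act g' (cc j))" g] idx_props[OF C] by simp
  also have "\<dots> = prep (g + g') *\<^sub>v unit_vec kk j" using prep_unit[OF j] act_act by simp
  finally show "prep (g + g') *\<^sub>v unit_vec kk j = (prep g * prep g') *\<^sub>v unit_vec kk j" by simp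
qed

lemma prep_zero: "prep 0 = 1\<^sub>m kk"
  by (rule mat_eq_units[OF prep_carrier one_carrier_mat]) (simp add: prep_unit idx_cc)

lemma prep_adj: "mat_adjoint (prep g) = prep (-g)"
proof (rule eq_matI)
  fix i j assume "i < dim_row (prep (-g))" "j < dim_col (prep (-g))"
  then have i: "i < kk" and j: "j < kk" by (auto simp: prep_def)
  have "mat_adjoint (prep g) $$ (i,j) = (if act g (cc i) = cc j then 1 else 0)"
    using i j unfolding prep_def by simp
  also have "\<dots> = prep (-g) $$ (i,j)"
  proof -
    have e: "(act g (cc i) = cc j) = (act (-g) (cc j) = cc i)" using act_eq_iff[of g "cc i" "cc j"] by auto
    show ?thesis using i j e unfolding prep_def by simp
  qed
  finally show "mat_adjoint (prep g) $$ (i,j) = prep (-g) $$ (i,j)" .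
qed (simp_all add: prep_def)

lemma prep_unitary: "unitary_rep kk prep"
  unfolding unitary_rep_def
proof (intro conjI allI impI)
  fix x show "prep x \<in> carrier_mat kk kk" by (rule prep_carrier)
  show "mat_adjoint (prep x) * prep x = 1\<^sub>m kk"
    using prep_adj prep_hom[of "-x" x, symmetric] prep_zero by simp
next
  fix x y show "prep (x + y) = prep x * prep y" by (rule prep_hom)
next
  fix i j assume i: "i < kk" and j: "j < kk"
  obtain a where a: "cc j = act a H" using cc_in[OF j] unfolding left_cosets_def act_def by auto
  obtain b where b: "cc i = act b H" using cc_in[OF i] unfolding left_cosets_def act_def by auto
  have "prep x $$ (i,j) = (if act x (act a H) = act b H then 1 else 0)" for x
    using i j a b unfolding prep_def by simp
  then show "continuous_on UNIV (\<lambda>x. prep x $$ (i, j))" using cont_coset_test[of a b] by simp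
qed


lemma converse_normal:
  assumes rk: "\<forall>n \<rho>. irreducible_unitary_rep n \<rho> \<longrightarrow> mat_rank (FT n \<rho>) = n \<or> mat_rank (FT n \<rho>) = 0"
  shows "\<forall>g h. h \<in> H \<longrightarrow> g + h + - g \<in> H"
proof (rule ccontr)
  assume "\<not> ?thesis"
  then obtain g0 h0 where h0: "h0 \<in> H" and nh: "g0 + h0 + - g0 \<notin> H" by blast
  have HC: "H \<in> left_cosets H" by (rule H_coset)
  define i0 where "i0 = idx H"
  have i0: "i0 < kk" "cc i0 = H" using idx_props[OF HC] unfolding i0_def by auto
  define v where "v = (unit_vec kk i0 :: complex vec)"
  have vc: "v \<in> carrier_vec kk" unfolding v_def by simp
  have actH: "act h H = H" if "h \<in> H" for h
    using coset_eq_iff[of h 0] that by simp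
  have fv: "fixedv prep H v" unfolding fixedv_def v_def
  proof
    fix h assume h: "h \<in> H"
    show "prep h *\<^sub>v unit_vec kk i0 = unit_vec kk i0"
      using prep_unit[OF i0(1)] i0 actH[OF h] unfolding i0_def by simp
  qed
  have nfv: "\<not> fixedv prep H (prep (-g0) *\<^sub>v v)"
  proof
    assume a: "fixedv prep H (prep (-g0) *\<^sub>v v)"
    define C where "C = act (-g0) H"
    have C: "C \<in> left_cosets H" unfolding C_def using cosets_act[OF HC] .
    define j where "j = idx C"
    have j: "j < kk" "cc j = C" using idx_props[OF C] unfolding j_def by auto
    have pv: "prep (-g0) *\<^sub>v v = unit_vec kk j" unfolding v_def j_def C_def using prep_unit[OF i0(1)] i0 by simp
    have C2: "act h0 C \<in> left_cosets H" using cosets_act[OF C] .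
    have "prep h0 *\<^sub>v unit_vec kk j = unit_vec kk j" using a h0 pv unfolding fixedv_def by simp
    then have "(unit_vec kk (idx (act h0 C)) :: complex vec) = unit_vec kk j" using prep_unit[OF j(1)] j by simp
    then have "idx (act h0 C) = j" using idx_props[OF C2] j by simp
    then have "act h0 C = C" using idx_props[OF C2] j by simp
    then have "act (h0 + - g0) H = act (-g0) H" unfolding C_def act_act .
    then have "- (- g0) + (h0 + - g0) \<in> H" using coset_eq_iff by blast
    moreover have "- (- g0) + (h0 + - g0) = g0 + h0 + - g0" by (simp only: minus_minus add.assoc)
    ultimately show False using nh by simp
  qed
  obtain r \<tau> x g' where irr: "irreducible_unitary_rep r \<tau>" and xc: "x \<in> carrier_vec r"
    and fx: "fixedv \<tau> H x" and nfx: "\<not> fixedv \<tau> H (\<tau> g' *\<^sub>v x)"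
    using reduce[of kk H] prep_unitary vc fv nfv by blast
  have u: "unitary_rep r \<tau>" using irr unfolding irreducible_unitary_rep_def by simp
  note c = unitary_rep_carrier[OF u]
  have x0: "x \<noteq> 0\<^sub>v r"
  proof
    assume "x = 0\<^sub>v r"
    then have "fixedv \<tau> H (\<tau> g' *\<^sub>v x)" unfolding fixedv_def using mat_vec_zero[OF c] by simp
    then show False using nfx by simp
  qed
  define y where "y = \<tau> g' *\<^sub>v x"
  have yc: "y \<in> carrier_vec r" unfolding y_def using mult_mat_vec_carrier[OF c xc] .
  obtain h where h: "h \<in> H" "\<tau> h *\<^sub>v y \<noteq> y" using nfx unfolding fixedv_def y_def by blast
  have "mat_rank (FT r \<tau>) \<noteq> r \<and> mat_rank (FT r \<tau>) \<noteq> 0"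
    using converse_rank[OF u xc x0 fx[unfolded fixedv_def] yc h] .
  moreover have "mat_rank (FT r \<tau>) = r \<or> mat_rank (FT r \<tau>) = 0" using rk[rule_format, OF irr] .
  ultimately show False by simp
qed

end

theorem mainTheorem8:
  fixes \<mu> :: "'g::{group_add, t2_space} measure" and H :: "'g set"
  assumes "compact_group TYPE('g)"
    and "normalized_haar \<mu>"
    and "is_subgroup H" and "closed H"
    and "finite (left_cosets H)"
  shows "normal_subgroup H \<longleftrightarrow>
    (\<forall>n \<rho>. irreducible_unitary_rep n \<rho> \<longrightarrow>
       mat_rank (fourier \<mu> (indicator H) n \<rho>) = n \<or>
       mat_rank (fourier \<mu> (indicator H) n \<rho>) = 0)"
proof -
  interpret cgH \<mu> H using assms by unfold_locales
  show ?thesis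
  proof
    assume "normal_subgroup H"
    then have nrm: "\<forall>g h. h \<in> H \<longrightarrow> g + h + - g \<in> H" unfolding normal_subgroup_def by blast
    show "\<forall>n \<rho>. irreducible_unitary_rep n \<rho> \<longrightarrow>
       mat_rank (fourier \<mu> (indicator H) n \<rho>) = n \<or> mat_rank (fourier \<mu> (indicator H) n \<rho>) = 0"
      using forward_rank[OF nrm] by blast
  next
    assume "\<forall>n \<rho>. irreducible_unitary_rep n \<rho> \<longrightarrow>
       mat_rank (fourier \<mu> (indicator H) n \<rho>) = n \<or> mat_rank (fourier \<mu> (indicator H) n \<rho>) = 0"
    then have "\<forall>g h. h \<in> H \<longrightarrow> g + h + - g \<in> H" by (rule converse_normal)
    then show "normal_subgroup H" unfolding normal_subgroup_def using assms(3) by blast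
  qed
qed


end
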